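(* Let $k$ be the squared exponential kernel on $\mathcal{D}\subset\mathbb{R}^d$. Let $X\subset\mathcal{D}$ be a finite set and $X^{\mathrm s}\subset X$. For any finite $X^{\mathrm a}\subset\mathcal{D}$, let $K$ and $\tilde K$ be the kernel matrices on $X$ and on $X\cup X^{\mathrm a}$ respectively, let $U$ be the Nyström approximation of $K$ based on $X^{\mathrm s}$, and $\tilde U$ the Nyström approximation of $\tilde K$ based on $X^{\mathrm s}\cup X^{\mathrm a}$. Then $$\mathrm{tr}(\tilde K-\tilde U)\le\mathrm{tr}(K-U).$$
   Context: For a dataset $X=\{x_1,\dots,x_N\}$ with kernel matrix $K_{XX}=[k(x_i,x_j)]_{i,j}$ and $S=\{x_{s_1},\dots,x_{s_M}\}\subset X$, the Nyström approximation of $K_{XX}$ based on $S$ is $U_{XX}=K_{XS}K_{SS}^\dagger K_{SX}$, where $K_{XS}=[k(x_i,x_{s_j})]_{i,j}$, $K_{SS}=[k(x_{s_i},x_{s_j})]_{i,j}$ and $\dagger$ denotes the pseudoinverse. *)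

theory Defs
  imports "HOL-Analysis.Analysis"
begin

text \<open>Matrices indexed by (finite) sets of points are represented as functions
  of two indices; only the entries with indices in the relevant index sets matter.\<close>

text \<open>Squared exponential kernel with signal standard deviation sf and lengthscale l.\<close>
definition se_kernel :: "real \<Rightarrow> real \<Rightarrow> real^'d \<Rightarrow> real^'d \<Rightarrow> real" where
  "se_kernel sf l x y = sf\<^sup>2 * exp (- (norm (x - y))\<^sup>2 / (2 * l\<^sup>2))"

definition smat_mult :: "'i set \<Rightarrow> ('r \<Rightarrow> 'i \<Rightarrow> real) \<Rightarrow> ('i \<Rightarrow> 'c \<Rightarrow> real) \<Rightarrow> 'r \<Rightarrow> 'c \<Rightarrow> real" where
  "smat_mult I A B = (\<lambda>i j. \<Sum>k\<in>I. A i k * B k j)"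

definition is_pinv :: "'i set \<Rightarrow> ('i \<Rightarrow> 'i \<Rightarrow> real) \<Rightarrow> ('i \<Rightarrow> 'i \<Rightarrow> real) \<Rightarrow> bool" where
  "is_pinv S A B \<longleftrightarrow>
     (\<forall>i\<in>S. \<forall>j\<in>S. smat_mult S (smat_mult S A B) A i j = A i j) \<and>
     (\<forall>i\<in>S. \<forall>j\<in>S. smat_mult S (smat_mult S B A) B i j = B i j) \<and>
     (\<forall>i\<in>S. \<forall>j\<in>S. smat_mult S A B i j = smat_mult S A B j i) \<and>
     (\<forall>i\<in>S. \<forall>j\<in>S. smat_mult S B A i j = smat_mult S B A j i) \<and>
     (\<forall>i j. i \<notin> S \<or> j \<notin> S \<longrightarrow> B i j = 0)"

definition pinv :: "'i set \<Rightarrow> ('i \<Rightarrow> 'i \<Rightarrow> real) \<Rightarrow> 'i \<Rightarrow> 'i \<Rightarrow> real" where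
  "pinv S A = (THE B. is_pinv S A B)"

definition nystrom :: "('a \<Rightarrow> 'a \<Rightarrow> real) \<Rightarrow> 'a set \<Rightarrow> 'a \<Rightarrow> 'a \<Rightarrow> real" where
  "nystrom k S = smat_mult S (smat_mult S k (pinv S k)) k"

definition nystrom_trace_err :: "('a \<Rightarrow> 'a \<Rightarrow> real) \<Rightarrow> 'a set \<Rightarrow> 'a set \<Rightarrow> real" where
  "nystrom_trace_err k X S = (\<Sum>x\<in>X. k x x - nystrom k S x x)"

end

theory Submission
  imports Defs "Jordan_Normal_Form.Determinant"
begin


definition psdk :: "('a \<Rightarrow> 'a \<Rightarrow> real) \<Rightarrow> bool" where
  "psdk K \<longleftrightarrow> (\<forall>F c. finite F \<longrightarrow> 0 \<le> (\<Sum>x\<in>F. \<Sum>y\<in>F. c x * c y * K x y))"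

lemma psd_pow: "psdk (\<lambda>x y :: real^'d. (x \<bullet> y) ^ n)"
proof (induction n)
  case 0
  show ?case unfolding psdk_def
  proof (intro allI impI)
    fix F :: "(real^'d) set" and c :: "real^'d \<Rightarrow> real"
    have "(\<Sum>x\<in>F. \<Sum>y\<in>F. c x * c y * (x \<bullet> y) ^ 0) = (\<Sum>x\<in>F. c x) * (\<Sum>y\<in>F. c y)"
      by (simp add: sum_product)
    thus "0 \<le> (\<Sum>x\<in>F. \<Sum>y\<in>F. c x * c y * (x \<bullet> y) ^ 0)" by simp
  qed
next
  case (Suc n)
  show ?case unfolding psdk_def
  proof (intro allI impI)
    fix F :: "(real^'d) set" and c :: "real^'d \<Rightarrow> real"
    assume F: "finite F"
    have "(\<Sum>x\<in>F. \<Sum>y\<in>F. c x * c y * (x \<bullet> y) ^ Suc n)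
        = (\<Sum>x\<in>F. \<Sum>y\<in>F. \<Sum>i\<in>UNIV. (c x * x$i) * (c y * y$i) * (x \<bullet> y) ^ n)"
      by (intro sum.cong refl) (simp add: inner_vec_def sum_distrib_left sum_distrib_right mult_ac)
    also have "\<dots> = (\<Sum>x\<in>F. \<Sum>i\<in>UNIV. \<Sum>y\<in>F. (c x * x$i) * (c y * y$i) * (x \<bullet> y) ^ n)"
      by (rule sum.cong[OF refl], rule sum.swap)
    also have "\<dots> = (\<Sum>i\<in>UNIV. \<Sum>x\<in>F. \<Sum>y\<in>F. (c x * x$i) * (c y * y$i) * (x \<bullet> y) ^ n)"
      by (rule sum.swap)
    also have "\<dots> \<ge> 0"
    proof (rule sum_nonneg)
      fix i :: 'd
      show "0 \<le> (\<Sum>x\<in>F. \<Sum>y\<in>F. (c x * x$i) * (c y * y$i) * (x \<bullet> y) ^ n)"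
        using Suc.IH F unfolding psdk_def by simp
    qed
    finally show "0 \<le> (\<Sum>x\<in>F. \<Sum>y\<in>F. c x * c y * (x \<bullet> y) ^ Suc n)" .
  qed
qed

lemma psd_exp: assumes "a \<ge> 0" shows "psdk (\<lambda>x y :: real^'d. exp (a * (x \<bullet> y)))"
  unfolding psdk_def
proof (intro allI impI)
  fix F :: "(real^'d) set" and c :: "real^'d \<Rightarrow> real"
  assume F: "finite F"
  define t where "t n = (\<Sum>x\<in>F. \<Sum>y\<in>F. c x * c y * ((a * (x \<bullet> y)) ^ n / fact n))" for n
  have S: "t sums (\<Sum>x\<in>F. \<Sum>y\<in>F. c x * c y * exp (a * (x \<bullet> y)))"
    unfolding t_def
  proof (intro sums_sum)
    fix x y
    show "(\<lambda>n. c x * c y * ((a * (x \<bullet> y)) ^ n / fact n)) sums (c x * c y * exp (a * (x \<bullet> y)))"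
      using exp_converges[of "a * (x \<bullet> y)"] by (intro sums_mult) (simp add: divide_inverse mult.commute)
  qed
  have nn: "t n \<ge> 0" for n
  proof -
    have "t n = (a ^ n / fact n) * (\<Sum>x\<in>F. \<Sum>y\<in>F. c x * c y * (x \<bullet> y) ^ n)"
      unfolding t_def by (simp add: sum_distrib_left power_mult_distrib mult_ac)
    also have "\<dots> \<ge> 0"
      by (rule mult_nonneg_nonneg, use assms in simp, rule psd_pow[of n, unfolded psdk_def, rule_format, OF F])
    finally show ?thesis .
  qed
  show "0 \<le> (\<Sum>x\<in>F. \<Sum>y\<in>F. c x * c y * exp (a * (x \<bullet> y)))"
    using sums_unique[OF S] suminf_nonneg[OF sums_summable[OF S] nn] by simp
qed

lemma se_factor: assumes l: "l \<noteq> 0" shows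
  "se_kernel sf l x y = sf\<^sup>2 * exp (- (norm x)\<^sup>2 / (2 * l\<^sup>2)) * exp (- (norm y)\<^sup>2 / (2 * l\<^sup>2))
      * exp ((1 / l\<^sup>2) * (x \<bullet> y))"
proof -
  have n: "(norm (x - y))\<^sup>2 = (norm x)\<^sup>2 + (norm y)\<^sup>2 - 2 * (x \<bullet> y)"
    by (simp add: power2_norm_eq_inner inner_diff_left inner_diff_right inner_commute)
  have "- (norm (x - y))\<^sup>2 / (2 * l\<^sup>2) = - (norm x)\<^sup>2 / (2 * l\<^sup>2) + - (norm y)\<^sup>2 / (2 * l\<^sup>2) + (1 / l\<^sup>2) * (x \<bullet> y)"
    unfolding n using l by (simp add: field_simps)
  hence "exp (- (norm (x - y))\<^sup>2 / (2 * l\<^sup>2)) = exp (- (norm x)\<^sup>2 / (2 * l\<^sup>2)) * exp (- (norm y)\<^sup>2 / (2 * l\<^sup>2)) * exp ((1 / l\<^sup>2) * (x \<bullet> y))"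
    by (simp only: exp_add)
  thus ?thesis unfolding se_kernel_def by (simp only: mult.assoc)
qed

lemma se_sym: "se_kernel sf l x y = se_kernel sf l y x"
  unfolding se_kernel_def by (simp add: norm_minus_commute)

lemma psd_se: assumes l: "l \<noteq> 0" shows "psdk (se_kernel sf l)"
  unfolding psdk_def
proof (intro allI impI)
  fix F :: "(real^'d) set" and c :: "real^'d \<Rightarrow> real"
  assume F: "finite F"
  define g where "g x = exp (- (norm x)\<^sup>2 / (2 * l\<^sup>2))" for x :: "real^'d"
  have "(\<Sum>x\<in>F. \<Sum>y\<in>F. c x * c y * se_kernel sf l x y)
     = sf\<^sup>2 * (\<Sum>x\<in>F. \<Sum>y\<in>F. (c x * g x) * (c y * g y) * exp ((1 / l\<^sup>2) * (x \<bullet> y)))"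
    unfolding se_factor[OF l] g_def by (simp add: sum_distrib_left mult_ac)
  also have "\<dots> \<ge> 0"
    by (rule mult_nonneg_nonneg, simp, rule psd_exp[of "1 / l\<^sup>2", unfolded psdk_def, rule_format, OF _ F]) simp
  finally show "0 \<le> (\<Sum>x\<in>F. \<Sum>y\<in>F. c x * c y * se_kernel sf l x y)" .
qed



lemma inv_exists:
  fixes K :: "'a \<Rightarrow> 'a \<Rightarrow> real"
  assumes fin: "finite T"
    and spd: "\<And>c. (\<Sum>x\<in>T. \<Sum>y\<in>T. c x * c y * K x y) = 0 \<Longrightarrow> \<forall>x\<in>T. c x = 0"
  shows "\<exists>B. (\<forall>x y. x \<notin> T \<or> y \<notin> T \<longrightarrow> B x y = 0)
     \<and> (\<forall>i\<in>T. \<forall>j\<in>T. (\<Sum>z\<in>T. K i z * B z j) = (if i = j then 1 else 0))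
     \<and> (\<forall>i\<in>T. \<forall>j\<in>T. (\<Sum>z\<in>T. B i z * K z j) = (if i = j then 1 else 0))"
proof -
  obtain xs where xs: "set xs = T" "distinct xs" using finite_distinct_list[OF fin] by blast
  define n where "n = length xs"
  define A where "A = Matrix.mat n n (\<lambda>(i,j). K (xs!i) (xs!j))"
  have Ac: "A \<in> carrier_mat n n" unfolding A_def by simp
  have bij: "bij_betw ((!) xs) {..<n} T" using bij_betw_nth[OF xs(2)] xs(1) n_def by simp
  have inj: "inj_on ((!) xs) {..<n}" using bij bij_betw_imp_inj_on by blast
  define ix where "ix = the_inv_into {..<n} ((!) xs)"
  have ix: "\<And>i. i < n \<Longrightarrow> ix (xs!i) = i" unfolding ix_def using the_inv_into_f_f[OF inj] by simp
  have sumT: "\<And>f. (\<Sum>z\<in>T. f z) = (\<Sum>i<n. f (xs!i))"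
    using sum.reindex_bij_betw[OF bij, symmetric] by simp
  have Tn: "\<And>z. z \<in> T \<Longrightarrow> \<exists>i<n. z = xs!i" using xs(1) n_def by (auto simp: in_set_conv_nth)
  have det: "Determinant.det A \<noteq> 0"
  proof
    assume "Determinant.det A = 0"
    then obtain v where v: "v \<in> carrier_vec n" "v \<noteq> 0\<^sub>v n" "A *\<^sub>v v = 0\<^sub>v n"
      by (auto simp: det_0_iff_vec_prod_zero_field[OF Ac])
    define c where "c z = v $ ix z" for z
    have cxs: "\<And>i. i < n \<Longrightarrow> c (xs!i) = v$i" unfolding c_def using ix by simp
    have Av: "(\<Sum>j<n. K (xs!i) (xs!j) * v$j) = 0" if "i < n" for i
    proof -
      have "(A *\<^sub>v v) $ i = 0" using v(3) that by simp
      moreover have "(A *\<^sub>v v) $ i = (\<Sum>j<n. K (xs!i) (xs!j) * v$j)"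
        using that v(1) Ac unfolding A_def
        by (auto simp: scalar_prod_def lessThan_atLeast0 intro!: sum.cong)
      ultimately show ?thesis by simp
    qed
    have "(\<Sum>x\<in>T. \<Sum>y\<in>T. c x * c y * K x y) = (\<Sum>i<n. v$i * (\<Sum>j<n. K (xs!i) (xs!j) * v$j))"
      unfolding sumT by (auto simp: cxs sum_distrib_left intro!: sum.cong)
    also have "\<dots> = 0" using Av by simp
    finally have "\<forall>x\<in>T. c x = 0" by (rule spd)
    hence "\<And>i. i < n \<Longrightarrow> v$i = 0" using cxs xs(1) n_def by (metis nth_mem)
    hence "v = 0\<^sub>v n" using v(1) by (intro eq_vecI) auto
    with v(2) show False by simp
  qed
  from det_non_zero_imp_unit[OF Ac det, of "()"]
  obtain Bm where Bm: "Bm \<in> carrier_mat n n" "A * Bm = 1\<^sub>m n" "Bm * A = 1\<^sub>m n"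
    by (auto simp: Units_def ring_mat_def)
  define B where "B x y = (if x \<in> T \<and> y \<in> T then Bm $$ (ix x, ix y) else 0)" for x y
  have Bxs: "B (xs!p) (xs!q) = Bm $$ (p,q)" if "p < n" "q < n" for p q
    using that ix xs(1) n_def unfolding B_def by auto
  have eqi: "(xs!p = xs!q) = (p = q)" if "p < n" "q < n" for p q
    using that xs(2) n_def nth_eq_iff_index_eq by blast
  have r1: "(\<Sum>z\<in>T. K i z * B z j) = (if i = j then 1 else 0)" if ij: "i \<in> T" "j \<in> T" for i j
  proof -
    obtain p q where pq: "p < n" "q < n" "i = xs!p" "j = xs!q" using Tn ij by blast
    have "(\<Sum>z\<in>T. K i z * B z j) = (A * Bm) $$ (p,q)"
      unfolding sumT using pq Bm(1) Ac unfolding A_def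
      by (auto simp: scalar_prod_def lessThan_atLeast0 Bxs intro!: sum.cong)
    also have "\<dots> = (if i = j then 1 else 0)" using Bm(2) pq eqi by simp
    finally show ?thesis .
  qed
  have r2: "(\<Sum>z\<in>T. B i z * K z j) = (if i = j then 1 else 0)" if ij: "i \<in> T" "j \<in> T" for i j
  proof -
    obtain p q where pq: "p < n" "q < n" "i = xs!p" "j = xs!q" using Tn ij by blast
    have "(\<Sum>z\<in>T. B i z * K z j) = (Bm * A) $$ (p,q)"
      unfolding sumT using pq Bm(1) Ac unfolding A_def
      by (auto simp: scalar_prod_def lessThan_atLeast0 Bxs intro!: sum.cong)
    also have "\<dots> = (if i = j then 1 else 0)" using Bm(3) pq eqi by simp
    finally show ?thesis .
  qed
  have B0: "\<forall>x y. x \<notin> T \<or> y \<notin> T \<longrightarrow> B x y = 0" by (simp add: B_def)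
  show ?thesis using B0 r1 r2 by blast
qed


lemma psd_cs:
  fixes K :: "'a \<Rightarrow> 'a \<Rightarrow> real"
  assumes psd: "psdk K" and sym: "\<And>x y. K x y = K y x" and F: "finite F"
    and Q0: "(\<Sum>x\<in>F. \<Sum>y\<in>F. c x * c y * K x y) = 0"
  shows "(\<Sum>x\<in>F. c x * K y x) = 0"
proof -
  define G where "G = insert y F"
  have G: "finite G" "F \<subseteq> G" "y \<in> G" using F unfolding G_def by auto
  define u where "u z = (if z \<in> F then c z else 0)" for z
  define v where "v z = (if z = y then 1 else (0::real))" for z
  define b where "b = (\<Sum>x\<in>F. c x * K y x)"
  define C where "C = K y y"
  have red: "(\<Sum>x\<in>G. u x * h x) = (\<Sum>x\<in>F. c x * h x)" for h
  proof -
    have "(\<Sum>x\<in>G. u x * h x) = (\<Sum>x\<in>F. u x * h x)"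
      using G by (intro sum.mono_neutral_right) (auto simp: u_def)
    also have "\<dots> = (\<Sum>x\<in>F. c x * h x)" by (intro sum.cong) (auto simp: u_def)
    finally show ?thesis .
  qed
  have del: "(\<Sum>x\<in>G. v x * h x) = h y" for h
  proof -
    have "(\<Sum>x\<in>G. v x * h x) = (\<Sum>x\<in>G. if x = y then h x else 0)"
      by (intro sum.cong) (auto simp: v_def)
    also have "\<dots> = h y" using G by simp
    finally show ?thesis .
  qed
  have A: "(\<Sum>x\<in>G. \<Sum>z\<in>G. u x * u z * K x z) = 0"
  proof -
    have "(\<Sum>x\<in>G. \<Sum>z\<in>G. u x * u z * K x z) = (\<Sum>x\<in>G. u x * (\<Sum>z\<in>G. u z * K x z))"
      by (simp add: sum_distrib_left mult_ac)
    also have "\<dots> = (\<Sum>x\<in>F. c x * (\<Sum>z\<in>F. c z * K x z))" by (simp add: red)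
    also have "\<dots> = 0" using Q0 by (simp add: sum_distrib_left mult_ac)
    finally show ?thesis .
  qed
  have B1: "(\<Sum>x\<in>G. \<Sum>z\<in>G. u x * v z * K x z) = b"
  proof -
    have "(\<Sum>x\<in>G. \<Sum>z\<in>G. u x * v z * K x z) = (\<Sum>x\<in>G. u x * (\<Sum>z\<in>G. v z * K x z))"
      by (simp add: sum_distrib_left mult_ac)
    also have "\<dots> = (\<Sum>x\<in>F. c x * K x y)" by (simp add: red del)
    finally show ?thesis unfolding b_def using sym by simp
  qed
  have B2: "(\<Sum>x\<in>G. \<Sum>z\<in>G. v x * u z * K x z) = b"
  proof -
    have "(\<Sum>x\<in>G. \<Sum>z\<in>G. v x * u z * K x z) = (\<Sum>x\<in>G. v x * (\<Sum>z\<in>G. u z * K x z))"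
      by (simp add: sum_distrib_left mult_ac)
    also have "\<dots> = (\<Sum>x\<in>F. c x * K y x)" by (simp add: red del)
    finally show ?thesis unfolding b_def .
  qed
  have Cv: "(\<Sum>x\<in>G. \<Sum>z\<in>G. v x * v z * K x z) = C"
  proof -
    have "(\<Sum>x\<in>G. \<Sum>z\<in>G. v x * v z * K x z) = (\<Sum>x\<in>G. v x * (\<Sum>z\<in>G. v z * K x z))"
      by (simp add: sum_distrib_left mult_ac)
    also have "\<dots> = C" by (simp add: del C_def)
    finally show ?thesis .
  qed
  have C0: "C \<ge> 0"
    using psd[unfolded psdk_def, rule_format, OF G(1), of v] Cv by simp
  have quad: "0 \<le> 2 * t * b + t\<^sup>2 * C" for t
  proof -
    have "0 \<le> (\<Sum>x\<in>G. \<Sum>z\<in>G. (u x + t * v x) * (u z + t * v z) * K x z)"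
      by (rule psd[unfolded psdk_def, rule_format, OF G(1)])
    also have "\<dots> = (\<Sum>x\<in>G. \<Sum>z\<in>G. u x * u z * K x z) + t * (\<Sum>x\<in>G. \<Sum>z\<in>G. u x * v z * K x z)
        + t * (\<Sum>x\<in>G. \<Sum>z\<in>G. v x * u z * K x z) + t\<^sup>2 * (\<Sum>x\<in>G. \<Sum>z\<in>G. v x * v z * K x z)"
      by (simp add: sum.distrib sum_distrib_left algebra_simps power2_eq_square)
    also have "\<dots> = 2 * t * b + t\<^sup>2 * C" using A B1 B2 Cv by simp
    finally show ?thesis .
  qed
  show ?thesis
  proof (rule ccontr)
    assume "(\<Sum>x\<in>F. c x * K y x) \<noteq> 0"
    hence bnz: "b \<noteq> 0" unfolding b_def .
    define t where "t = - b / (C + 1)"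
    have c1: "C + 1 \<noteq> 0" using C0 by simp
    have tc: "t * (C + 1) = - b" unfolding t_def using c1 by simp
    have "(C + 1)\<^sup>2 * (2 * t * b + t\<^sup>2 * C) = 2 * (t * (C + 1)) * b * (C + 1) + (t * (C + 1))\<^sup>2 * C"
      by (simp add: algebra_simps power2_eq_square)
    also have "\<dots> = - (b\<^sup>2 * (C + 2))" unfolding tc by (simp add: algebra_simps power2_eq_square)
    finally have "(C + 1)\<^sup>2 * (2 * t * b + t\<^sup>2 * C) = - (b\<^sup>2 * (C + 2))" .
    moreover have "(C + 1)\<^sup>2 * (2 * t * b + t\<^sup>2 * C) \<ge> 0" using quad[of t] by simp
    moreover have "b\<^sup>2 * (C + 2) > 0" using bnz C0 by simp
    ultimately show False by linarith
  qed
qed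

lemma exp_indep:
  fixes F :: "(real^'d) set" and d :: "real^'d \<Rightarrow> real"
  assumes "finite F" "a > 0" "\<forall>y. (\<Sum>x\<in>F. d x * exp (a * (y \<bullet> x))) = 0"
  shows "\<forall>x\<in>F. d x = 0"
  using assms(1,3)
proof (induction F rule: finite_psubset_induct)
  case (psubset F)
  show ?case
  proof (cases "F = {}")
    case True thus ?thesis by simp
  next
    case False
    obtain m where m: "m \<in> F" "norm m = Max (norm ` F)"
      using False psubset.hyps by (metis (mono_tags) Max_in finite_imageI image_iff image_is_empty)
    have mmax: "norm x \<le> norm m" if "x \<in> F" for x
      using m(2) psubset.hyps that by simp
    have lt: "m \<bullet> x < m \<bullet> m" if "x \<in> F" "x \<noteq> m" for x
    proof -
      have "0 < (norm (m - x))\<^sup>2" using that by simp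
      hence "0 < m \<bullet> m - 2 * (m \<bullet> x) + x \<bullet> x"
        by (simp add: power2_norm_eq_inner inner_diff_left inner_diff_right inner_commute)
      moreover have "(norm x)\<^sup>2 \<le> (norm m)\<^sup>2" using mmax[OF that(1)] by (simp add: power_mono)
      hence "x \<bullet> x \<le> m \<bullet> m" by (simp add: power2_norm_eq_inner)
      ultimately show ?thesis by linarith
    qed
    define f where "f t = d m + (\<Sum>x\<in>F-{m}. d x * exp (-(a * (m \<bullet> m - m \<bullet> x)) * t))" for t :: real
    have f0: "f t = 0" for t
    proof -
      have "0 = exp (- (a * t * (m \<bullet> m))) * (\<Sum>x\<in>F. d x * exp (a * ((t *\<^sub>R m) \<bullet> x)))"
        using psubset.prems[rule_format, of "t *\<^sub>R m"] by simp
      also have "\<dots> = (\<Sum>x\<in>F. d x * exp (-(a * (m \<bullet> m - m \<bullet> x)) * t))"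
        by (simp add: sum_distrib_left mult_ac flip: exp_add) (simp add: algebra_simps)
      also have "\<dots> = f t"
        unfolding f_def using psubset.hyps m(1) by (simp add: sum.remove)
      finally show ?thesis by simp
    qed
    have "(f \<longlongrightarrow> d m + 0) at_top"
      unfolding f_def
    proof (intro tendsto_add tendsto_const tendsto_null_sum)
      fix x assume x: "x \<in> F - {m}"
      have b: "-(a * (m \<bullet> m - m \<bullet> x)) < 0" using lt[of x] x assms(2) by simp
      have "filterlim (\<lambda>t::real. -(a * (m \<bullet> m - m \<bullet> x)) * t) at_bot at_top"
        by (rule filterlim_tendsto_neg_mult_at_bot[OF tendsto_const b filterlim_ident])
      hence "((\<lambda>t. exp (-(a * (m \<bullet> m - m \<bullet> x)) * t)) \<longlongrightarrow> 0) at_top"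
        by (rule filterlim_compose[OF exp_at_bot])
      thus "((\<lambda>t. d x * exp (-(a * (m \<bullet> m - m \<bullet> x)) * t)) \<longlongrightarrow> 0) at_top"
        by (intro tendsto_mult_right_zero)
    qed
    moreover have "f = (\<lambda>_. 0)" using f0 by auto
    hence "(f \<longlongrightarrow> 0) at_top" by simp
    ultimately have dm: "d m = 0" using tendsto_unique[OF trivial_limit_at_top_linorder] by fastforce
    have "\<forall>x\<in>F-{m}. d x = 0"
    proof (rule psubset.IH)
      show "F - {m} \<subset> F" using m(1) by auto
      show "\<forall>y. (\<Sum>x\<in>F-{m}. d x * exp (a * (y \<bullet> x))) = 0"
        using psubset.prems psubset.hyps m(1) dm by (simp add: sum.remove)
    qed
    thus ?thesis using dm by blast
  qed
qed

lemma se_spd: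
  fixes c :: "real^'d \<Rightarrow> real"
  assumes sf: "sf > 0" and l: "l > 0" and F: "finite F"
    and Q0: "(\<Sum>x\<in>F. \<Sum>y\<in>F. c x * c y * se_kernel sf l x y) = 0"
  shows "\<forall>x\<in>F. c x = 0"
proof -
  define g where "g x = exp (- (norm x)\<^sup>2 / (2 * l\<^sup>2))" for x :: "real^'d"
  have l0: "l \<noteq> 0" using l by simp
  have cs: "(\<Sum>x\<in>F. c x * se_kernel sf l y x) = 0" for y
    by (rule psd_cs[OF psd_se[OF l0] se_sym F Q0])
  have "\<forall>y. (\<Sum>x\<in>F. (c x * g x) * exp ((1 / l\<^sup>2) * (y \<bullet> x))) = 0"
  proof
    fix y
    have "(sf\<^sup>2 * g y) * (\<Sum>x\<in>F. (c x * g x) * exp ((1 / l\<^sup>2) * (y \<bullet> x))) = (\<Sum>x\<in>F. c x * se_kernel sf l y x)"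
      unfolding se_factor[OF l0] g_def by (simp add: sum_distrib_left mult_ac)
    also have "\<dots> = 0" by (rule cs)
    finally show "(\<Sum>x\<in>F. (c x * g x) * exp ((1 / l\<^sup>2) * (y \<bullet> x))) = 0"
      using sf unfolding g_def by simp
  qed
  from exp_indep[OF F _ this] l have "\<forall>x\<in>F. c x * g x = 0" by simp
  thus ?thesis unfolding g_def by simp
qed



lemma assoc2:
  fixes a :: "'a \<Rightarrow> real"
  shows "(\<Sum>j\<in>T. (\<Sum>z\<in>T. a z * b z j) * c j) = (\<Sum>z\<in>T. a z * (\<Sum>j\<in>T. b z j * c j))"
  by (simp add: sum_distrib_left sum_distrib_right mult.assoc) (rule sum.swap)

lemma delta_l:
  assumes "finite T" "i \<in> T"
  shows "(\<Sum>z\<in>T. (if i = z then 1 else 0) * f z) = (f i :: real)"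
proof -
  have "(\<Sum>z\<in>T. (if i = z then 1 else 0) * f z) = (\<Sum>z\<in>T. if i = z then f z else 0)"
    by (intro sum.cong) auto
  also have "\<dots> = f i" using assms by simp
  finally show ?thesis .
qed

lemma delta_r:
  assumes "finite T" "j \<in> T"
  shows "(\<Sum>z\<in>T. f z * (if z = j then 1 else 0)) = (f j :: real)"
proof -
  have "(\<Sum>z\<in>T. f z * (if z = j then 1 else 0)) = (\<Sum>z\<in>T. if j = z then f z else 0)"
    by (intro sum.cong) auto
  also have "\<dots> = f j" using assms by simp
  finally show ?thesis .
qed

context
  fixes K :: "'a \<Rightarrow> 'a \<Rightarrow> real"
  assumes Ksym: "\<And>x y. K x y = K y x"
    and Kpsd: "psdk K"
    and Kspd: "\<And>F c. finite F \<Longrightarrow> (\<Sum>x\<in>F. \<Sum>y\<in>F. c x * c y * K x y) = 0 \<Longrightarrow> \<forall>x\<in>F. c x = 0"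
begin

lemma pinv_char:
  assumes T: "finite T"
  obtains B where "pinv T K = B"
    "\<And>i j. i \<in> T \<Longrightarrow> j \<in> T \<Longrightarrow> (\<Sum>z\<in>T. K i z * B z j) = (if i = j then 1 else 0)"
    "\<And>i j. i \<in> T \<Longrightarrow> j \<in> T \<Longrightarrow> (\<Sum>z\<in>T. B i z * K z j) = (if i = j then 1 else 0)"
proof -
  obtain B where B0: "\<forall>x y. x \<notin> T \<or> y \<notin> T \<longrightarrow> B x y = 0"
    and r1: "\<forall>i\<in>T. \<forall>j\<in>T. (\<Sum>z\<in>T. K i z * B z j) = (if i = j then 1 else 0)"
    and r2: "\<forall>i\<in>T. \<forall>j\<in>T. (\<Sum>z\<in>T. B i z * K z j) = (if i = j then 1 else 0)"
    using inv_exists[OF T, of K] Kspd[OF T] by blast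
  have p1: "smat_mult T (smat_mult T K B) K i j = K i j" if "i \<in> T" "j \<in> T" for i j
  proof -
    have "smat_mult T (smat_mult T K B) K i j = (\<Sum>z\<in>T. (if i = z then 1 else 0) * K z j)"
      unfolding smat_mult_def using r1 that by (intro sum.cong) auto
    also have "\<dots> = K i j" using delta_l[OF T that(1)] .
    finally show ?thesis .
  qed
  have p2: "smat_mult T (smat_mult T B K) B i j = B i j" if "i \<in> T" "j \<in> T" for i j
  proof -
    have "smat_mult T (smat_mult T B K) B i j = (\<Sum>z\<in>T. (if i = z then 1 else 0) * B z j)"
      unfolding smat_mult_def using r2 that by (intro sum.cong) auto
    also have "\<dots> = B i j" using delta_l[OF T that(1)] .
    finally show ?thesis .
  qed
  have isp: "is_pinv T K B"
    unfolding is_pinv_def using p1 p2 B0 r1 r2 by (auto simp: smat_mult_def)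
  have uniq: "B' = B" if "is_pinv T K B'" for B'
  proof -
    have c1: "\<And>i j. i \<in> T \<Longrightarrow> j \<in> T \<Longrightarrow> (\<Sum>z\<in>T. (\<Sum>w\<in>T. K i w * B' w z) * K z j) = K i j"
      and c5: "\<And>i j. i \<notin> T \<or> j \<notin> T \<Longrightarrow> B' i j = 0"
      using that unfolding is_pinv_def smat_mult_def by auto
    have P: "(\<Sum>w\<in>T. K i w * B' w q) = (if i = q then 1 else 0)" if iq: "i \<in> T" "q \<in> T" for i q
    proof -
      have "(\<Sum>j\<in>T. (\<Sum>z\<in>T. (\<Sum>w\<in>T. K i w * B' w z) * K z j) * B j q) = (\<Sum>j\<in>T. K i j * B j q)"
        using c1 iq by (intro sum.cong) auto
      also have "\<dots> = (if i = q then 1 else 0)" using r1 iq by auto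
      finally have e: "(\<Sum>j\<in>T. (\<Sum>z\<in>T. (\<Sum>w\<in>T. K i w * B' w z) * K z j) * B j q) = (if i = q then 1 else 0)" .
      have "(\<Sum>j\<in>T. (\<Sum>z\<in>T. (\<Sum>w\<in>T. K i w * B' w z) * K z j) * B j q)
          = (\<Sum>z\<in>T. (\<Sum>w\<in>T. K i w * B' w z) * (\<Sum>j\<in>T. K z j * B j q))"
        by (rule assoc2)
      also have "\<dots> = (\<Sum>z\<in>T. (\<Sum>w\<in>T. K i w * B' w z) * (if z = q then 1 else 0))"
        using r1 iq by (intro sum.cong) auto
      also have "\<dots> = (\<Sum>w\<in>T. K i w * B' w q)" by (rule delta_r[OF T iq(2)])
      finally show ?thesis using e by simp
    qed
    have "B' w q = B w q" if wq: "w \<in> T" "q \<in> T" for w q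
    proof -
      have "B' w q = (\<Sum>i\<in>T. (if w = i then 1 else 0) * B' i q)" using delta_l[OF T wq(1)] by simp
      also have "\<dots> = (\<Sum>i\<in>T. (\<Sum>p\<in>T. B w p * K p i) * B' i q)"
        using r2 wq by (intro sum.cong) auto
      also have "\<dots> = (\<Sum>p\<in>T. B w p * (\<Sum>i\<in>T. K p i * B' i q))" by (rule assoc2)
      also have "\<dots> = (\<Sum>p\<in>T. B w p * (if p = q then 1 else 0))"
        using P wq by (intro sum.cong) auto
      also have "\<dots> = B w q" by (rule delta_r[OF T wq(2)])
      finally show ?thesis .
    qed
    thus ?thesis using c5 B0 by (intro ext) metis
  qed
  have "pinv T K = B" unfolding pinv_def using isp uniq by (rule the_equality)
  thus ?thesis using that r1 r2 by blast
qed

lemma nys_expand: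
  "nystrom K T x x = (\<Sum>s\<in>T. (\<Sum>t\<in>T. K x t * pinv T K t s) * K s x)"
  unfolding nystrom_def smat_mult_def by simp

lemma nys_in:
  assumes T: "finite T" and x: "x \<in> T"
  shows "nystrom K T x x = K x x"
proof -
  obtain B where B: "pinv T K = B"
    "\<And>i j. i \<in> T \<Longrightarrow> j \<in> T \<Longrightarrow> (\<Sum>z\<in>T. K i z * B z j) = (if i = j then 1 else 0)"
    using pinv_char[OF T] by blast
  have "nystrom K T x x = (\<Sum>s\<in>T. (if x = s then 1 else 0) * K s x)"
    unfolding nys_expand B(1) using B(2) x by (intro sum.cong) auto
  also have "\<dots> = K x x" by (rule delta_l[OF T x])
  finally show ?thesis .
qed

lemma nys_key:
  assumes T: "finite T"
  shows "2 * (\<Sum>s\<in>T. e s * K s x) - (\<Sum>s\<in>T. \<Sum>t\<in>T. e s * e t * K s t) \<le> nystrom K T x x"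
proof -
  obtain B where B: "pinv T K = B"
    "\<And>i j. i \<in> T \<Longrightarrow> j \<in> T \<Longrightarrow> (\<Sum>z\<in>T. K i z * B z j) = (if i = j then 1 else 0)"
    "\<And>i j. i \<in> T \<Longrightarrow> j \<in> T \<Longrightarrow> (\<Sum>z\<in>T. B i z * K z j) = (if i = j then 1 else 0)"
    using pinv_char[OF T] by blast
  define g where "g s = (\<Sum>t\<in>T. K x t * B t s)" for s
  have U: "nystrom K T x x = (\<Sum>s\<in>T. g s * K s x)" unfolding nys_expand B(1) g_def ..
  have gi: "(\<Sum>t\<in>T. g t * K t s) = K x s" if s: "s \<in> T" for s
  proof -
    have "(\<Sum>t\<in>T. g t * K t s) = (\<Sum>u\<in>T. K x u * (\<Sum>t\<in>T. B u t * K t s))"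
      unfolding g_def by (rule assoc2)
    also have "\<dots> = (\<Sum>u\<in>T. K x u * (if u = s then 1 else 0))" using B(3) s by (intro sum.cong) auto
    also have "\<dots> = K x s" by (rule delta_r[OF T s])
    finally show ?thesis .
  qed
  have E1: "(\<Sum>s\<in>T. \<Sum>t\<in>T. e s * g t * K s t) = (\<Sum>s\<in>T. e s * K s x)"
  proof -
    have "(\<Sum>s\<in>T. \<Sum>t\<in>T. e s * g t * K s t) = (\<Sum>s\<in>T. e s * (\<Sum>t\<in>T. g t * K t s))"
      by (simp add: sum_distrib_left mult_ac) (intro sum.cong refl arg_cong2[where f="(*)"] Ksym)
    also have "\<dots> = (\<Sum>s\<in>T. e s * K s x)" using gi by (simp add: Ksym[of x])
    finally show ?thesis .
  qed
  have E2: "(\<Sum>s\<in>T. \<Sum>t\<in>T. g s * e t * K s t) = (\<Sum>s\<in>T. e s * K s x)"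
  proof -
    have "(\<Sum>s\<in>T. \<Sum>t\<in>T. g s * e t * K s t) = (\<Sum>t\<in>T. \<Sum>s\<in>T. g s * e t * K s t)" by (rule sum.swap)
    also have "\<dots> = (\<Sum>t\<in>T. e t * (\<Sum>s\<in>T. g s * K s t))"
      by (simp add: sum_distrib_left mult_ac)
    also have "\<dots> = (\<Sum>s\<in>T. e s * K s x)" using gi by (simp add: Ksym[of x])
    finally show ?thesis .
  qed
  have E3: "(\<Sum>s\<in>T. \<Sum>t\<in>T. g s * g t * K s t) = nystrom K T x x"
  proof -
    have "(\<Sum>s\<in>T. \<Sum>t\<in>T. g s * g t * K s t) = (\<Sum>s\<in>T. g s * (\<Sum>t\<in>T. g t * K t s))"
      by (simp add: sum_distrib_left mult_ac) (intro sum.cong refl arg_cong2[where f="(*)"] Ksym)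
    also have "\<dots> = (\<Sum>s\<in>T. g s * K s x)" using gi by (simp add: Ksym[of x])
    finally show ?thesis using U by simp
  qed
  have "0 \<le> (\<Sum>s\<in>T. \<Sum>t\<in>T. (e s - g s) * (e t - g t) * K s t)"
    by (rule Kpsd[unfolded psdk_def, rule_format, OF T])
  also have "\<dots> = (\<Sum>s\<in>T. \<Sum>t\<in>T. e s * e t * K s t) - (\<Sum>s\<in>T. \<Sum>t\<in>T. e s * g t * K s t)
      - (\<Sum>s\<in>T. \<Sum>t\<in>T. g s * e t * K s t) + (\<Sum>s\<in>T. \<Sum>t\<in>T. g s * g t * K s t)"
    by (simp add: sum.distrib sum_subtractf algebra_simps)
  finally show ?thesis unfolding E1 E2 E3 by simp
qed

lemma nys_mono:
  assumes T: "finite T" and ST: "S \<subseteq> T"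
  shows "nystrom K S x x \<le> nystrom K T x x"
proof -
  have S: "finite S" using T ST finite_subset by blast
  obtain B where B: "pinv S K = B"
    "\<And>i j. i \<in> S \<Longrightarrow> j \<in> S \<Longrightarrow> (\<Sum>z\<in>S. K i z * B z j) = (if i = j then 1 else 0)"
    "\<And>i j. i \<in> S \<Longrightarrow> j \<in> S \<Longrightarrow> (\<Sum>z\<in>S. B i z * K z j) = (if i = j then 1 else 0)"
    using pinv_char[OF S] by blast
  define g where "g s = (\<Sum>t\<in>S. K x t * B t s)" for s
  define e where "e s = (if s \<in> S then g s else 0)" for s
  have U: "nystrom K S x x = (\<Sum>s\<in>S. g s * K s x)" unfolding nys_expand B(1) g_def ..
  have gi: "(\<Sum>t\<in>S. g t * K t s) = K x s" if s: "s \<in> S" for s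
  proof -
    have "(\<Sum>t\<in>S. g t * K t s) = (\<Sum>u\<in>S. K x u * (\<Sum>t\<in>S. B u t * K t s))"
      unfolding g_def by (rule assoc2)
    also have "\<dots> = (\<Sum>u\<in>S. K x u * (if u = s then 1 else 0))" using B(3) s by (intro sum.cong) auto
    also have "\<dots> = K x s" by (rule delta_r[OF S s])
    finally show ?thesis .
  qed
  have red: "(\<Sum>s\<in>T. e s * h s) = (\<Sum>s\<in>S. g s * h s)" for h
  proof -
    have "(\<Sum>s\<in>T. e s * h s) = (\<Sum>s\<in>S. e s * h s)"
      using T ST by (intro sum.mono_neutral_right) (auto simp: e_def)
    also have "\<dots> = (\<Sum>s\<in>S. g s * h s)" by (intro sum.cong) (auto simp: e_def)
    finally show ?thesis .
  qed
  have Q: "(\<Sum>s\<in>T. \<Sum>t\<in>T. e s * e t * K s t) = nystrom K S x x"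
  proof -
    have "(\<Sum>s\<in>T. \<Sum>t\<in>T. e s * e t * K s t) = (\<Sum>s\<in>T. e s * (\<Sum>t\<in>T. e t * K s t))"
      by (simp add: sum_distrib_left mult_ac)
    also have "\<dots> = (\<Sum>s\<in>S. g s * (\<Sum>t\<in>S. g t * K t s))" by (simp add: red) (intro sum.cong refl arg_cong2[where f="(*)"] Ksym)
    also have "\<dots> = (\<Sum>s\<in>S. g s * K s x)" using gi by (simp add: Ksym[of x])
    finally show ?thesis using U by simp
  qed
  have L: "(\<Sum>s\<in>T. e s * K s x) = nystrom K S x x" using red U by simp
  show ?thesis using nys_key[OF T, of e x] Q L by simp
qed

end


theorem lemma3p7:
  fixes sf l :: real and D X Xs Xa :: "(real^'d) set"
  assumes "sf > 0" and "l > 0"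
    and "finite X" and "X \<subseteq> D" and "Xs \<subseteq> X"
    and "finite Xa" and "Xa \<subseteq> D"
  shows "nystrom_trace_err (se_kernel sf l) (X \<union> Xa) (Xs \<union> Xa)
           \<le> nystrom_trace_err (se_kernel sf l) X Xs"
proof -
  let ?k = "se_kernel sf l"
  have l0: "l \<noteq> 0" using assms(2) by simp
  have psd: "psdk ?k" by (rule psd_se[OF l0])
  have spd: "\<And>F c. finite F \<Longrightarrow> (\<Sum>x\<in>F. \<Sum>y\<in>F. c x * c y * ?k x y) = 0 \<Longrightarrow> \<forall>x\<in>F. c x = 0"
    using se_spd[OF assms(1,2)] by blast
  define T where "T = Xs \<union> Xa"
  have Xs: "finite Xs" using assms(3,5) finite_subset by blast
  have T: "finite T" unfolding T_def using Xs assms(6) by simp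
  define f where "f x = ?k x x - nystrom ?k T x x" for x
  have z: "f x = 0" if "x \<in> Xa" for x
    unfolding f_def using nys_in[OF se_sym psd spd T, of x] that T_def by simp
  have "nystrom_trace_err ?k (X \<union> Xa) T = (\<Sum>x\<in>X \<union> (Xa - X). f x)"
    unfolding nystrom_trace_err_def f_def by (simp add: Un_Diff_cancel)
  also have "\<dots> = (\<Sum>x\<in>X. f x) + (\<Sum>x\<in>Xa - X. f x)"
    using assms(3,6) by (intro sum.union_disjoint) auto
  also have "(\<Sum>x\<in>Xa - X. f x) = 0" using z by (intro sum.neutral) auto
  also have "(\<Sum>x\<in>X. f x) \<le> (\<Sum>x\<in>X. ?k x x - nystrom ?k Xs x x)"
    unfolding f_def using nys_mono[OF se_sym psd spd T] T_def by (intro sum_mono) auto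
  finally show ?thesis unfolding T_def nystrom_trace_err_def by simp
qed

end
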